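(* Let $1\le\ell_1\le\dots\le\ell_r\le n$, $K\in B(\varpi_{\ell_r})\otimes\cdots\otimes B(\varpi_{\ell_1})$, $\ell\in[n]$ with $\ell\ge\ell_r$, and $j\in[n-1]$. Then $$tT_j^{-1}\sum_{C\in B(\varpi_\ell)}X^C\Psi_{C\otimes K}=\sum_{D\in B(\varpi_\ell)}X^Df_{D,K},\qquad T_j\sum_{C\in B(\varpi_\ell)}X^C\Psi_{C\otimes K}=\sum_{D\in B(\varpi_\ell)}X^Dg_{D,K},$$ where $$f_{D,K}=\begin{cases}tT_j^{-1}\Psi_{s_jD\otimes K},& s_jD\le D,\\ T_j\Psi_{s_jD\otimes K}+(1-t)\Psi_{D\otimes K},& s_jD\ge D,\end{cases}\qquad g_{D,K}=\begin{cases}tT_j^{-1}\Psi_{s_jD\otimes K}-(1-t)\Psi_{D\otimes K},& s_jD\le D,\\ T_j\Psi_{s_jD\otimes K},& s_jD\ge D\end{cases}$$ (the two cases agree when $s_jD=D$).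
   Context: Fix $n\ge1$, $[n]=\{1,\dots,n\}$. $S_n$ with simple transpositions $s_i$ and length $\ell(\cdot)$ acts on $\mathbb Z^n$ by permuting coordinates; $\varpi_k=\varepsilon_1+\dots+\varepsilon_k$; $S_{n,\lambda}$ is the stabilizer of $\lambda$. The affine Hecke algebra $H$ is the $\mathbb Z[t^{\pm1}]$-algebra with generators $T_1,\dots,T_{n-1},X_1^{\pm1},\dots,X_n^{\pm1}$ and relations $T_i^2=(t-1)T_i+t$, $T_iT_{i+1}T_i=T_{i+1}T_iT_{i+1}$, $T_iT_j=T_jT_i$ ($|i-j|>1$), $X_iX_j=X_jX_i$, $T_iX_iT_i=tX_{i+1}$, $T_iX_j=X_jT_i$ ($j\notin\{i,i+1\}$); $tT_i^{-1}=T_i+1-t$. $T_w$ via reduced words; $H_n=\mathrm{span}\{T_w\}$, $H_{n,\lambda}=\mathrm{span}\{T_w:w\in S_{n,\lambda}\}$, $\mathbf 1_\lambda=\sum_{w\in S_{n,\lambda}}T_w$. Columns: $B(\varpi_\ell)$ is the set of $C=(c_1<\dots<c_\ell)\subseteq[n]$; order $E\le F$ iff $e_i\le f_i$ for all $i$; $s_jC$ is the column whose underlying set is the image of $C$ under $(j,j+1)$; $X^C=\prod_{c\in C}X_c$; $u_C\in S_n$ sends $k\mapsto c_k$ ($k\le\ell$) and $\ell+1,\dots,n$ increasingly onto $[n]\setminus C$. $B(\varpi_{\ell_r})\otimes\cdots\otimes B(\varpi_{\ell_1})$ is the set of sequences $C_r\otimes\cdots\otimes C_1$, $C_i\in B(\varpi_{\ell_i})$;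 $C\otimes K$ prepends a column. $\Psi$: each $h\in H_n$ is uniquely $\sum_{F\in B(\varpi_\ell)}T_{u_F}h_F$, $h_F\in H_{n,\varpi_\ell}$. $\Psi_C=t^{\ell(u_C)}(T_{u_C^{-1}})^{-1}\mathbf 1_{\varpi_\ell}$ for $C\in B(\varpi_\ell)$; for $T=C\otimes S$ ($C\in B(\varpi_\ell)$, $S$ with columns of length $\le\ell$), write $\Psi_S=\sum_ET_{u_E}h_{E,S}$ ($h_{E,S}\in H_{n,\varpi_\ell}$) and set $\Psi_T=t^{\ell(u_C)}(T_{u_C^{-1}})^{-1}h_{C,S}$. *)

theory Defs
  imports "HOL-Combinatorics.Combinatorics"
begin

text \<open>The data of H: the element t, the generators T_i and X_i.  The coefficient
ring Z[t,t^-1] is realised as the subring generated by the central unit t.\<close>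
record 'h ahecke =
  tH :: 'h
  TH :: "nat \<Rightarrow> 'h"
  XH :: "nat \<Rightarrow> 'h"

definition hinv :: "'h::ring_1 \<Rightarrow> 'h" where
  "hinv a = (THE b. a * b = 1 \<and> b * a = 1)"

definition zpow :: "'h::ring_1 \<Rightarrow> int \<Rightarrow> 'h" where
  "zpow a k = (if 0 \<le> k then a ^ nat k else hinv a ^ nat (- k))"

definition sref :: "nat \<Rightarrow> nat \<Rightarrow> nat" where
  "sref i = transpose i (Suc i)"

definition wordperm :: "nat list \<Rightarrow> nat \<Rightarrow> nat" where
  "wordperm ws = foldr (\<lambda>i p. sref i \<circ> p) ws id"

definition is_word :: "nat \<Rightarrow> nat list \<Rightarrow> bool" where
  "is_word n ws \<longleftrightarrow> set ws \<subseteq> {1..<n}"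

definition Sn :: "nat \<Rightarrow> (nat \<Rightarrow> nat) set" where
  "Sn n = {w. w permutes {1..n}}"

definition perm_len :: "nat \<Rightarrow> (nat \<Rightarrow> nat) \<Rightarrow> nat" where
  "perm_len n w = (LEAST k. \<exists>ws. is_word n ws \<and> length ws = k \<and> wordperm ws = w)"

definition red_word :: "nat \<Rightarrow> (nat \<Rightarrow> nat) \<Rightarrow> nat list" where
  "red_word n w = (SOME ws. is_word n ws \<and> wordperm ws = w \<and> length ws = perm_len n w)"

definition Tw :: "'h::ring_1 ahecke \<Rightarrow> nat \<Rightarrow> (nat \<Rightarrow> nat) \<Rightarrow> 'h" where
  "Tw H n w = prod_list (map (TH H) (red_word n w))"

definition stab :: "nat \<Rightarrow> (nat \<Rightarrow> int) \<Rightarrow> (nat \<Rightarrow> nat) set" where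
  "stab n lam = {w \<in> Sn n. \<forall>i\<in>{1..n}. lam (w i) = lam i}"

definition varpi :: "nat \<Rightarrow> nat \<Rightarrow> int" where
  "varpi l = (\<lambda>i. if 1 \<le> i \<and> i \<le> l then 1 else 0)"

definition Xpow :: "'h::ring_1 ahecke \<Rightarrow> nat \<Rightarrow> (nat \<Rightarrow> int) \<Rightarrow> 'h" where
  "Xpow H n lam = prod_list (map (\<lambda>i. zpow (XH H i) (lam i)) [1..<Suc n])"

definition basis_idx :: "nat \<Rightarrow> (int \<times> (nat \<Rightarrow> int) \<times> (nat \<Rightarrow> nat)) set" where
  "basis_idx n = {(k, lam, w). (\<forall>i. i \<notin> {1..n} \<longrightarrow> lam i = 0) \<and> w \<in> Sn n}"

definition basis_elt :: "'h::ring_1 ahecke \<Rightarrow> nat \<Rightarrow> int \<times> (nat \<Rightarrow> int) \<times> (nat \<Rightarrow> nat) \<Rightarrow> 'h" where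
  "basis_elt H n = (\<lambda>(k, lam, w). zpow (tH H) k * Xpow H n lam * Tw H n w)"

definition is_affine_hecke :: "nat \<Rightarrow> 'h::ring_1 ahecke \<Rightarrow> bool" where
  "is_affine_hecke n H \<longleftrightarrow>
     (\<exists>s. tH H * s = 1 \<and> s * tH H = 1) \<and>
     (\<forall>h. tH H * h = h * tH H) \<and>
     (\<forall>i\<in>{1..n}. \<exists>s. XH H i * s = 1 \<and> s * XH H i = 1) \<and>
     (\<forall>i\<in>{1..n}. \<forall>j\<in>{1..n}. XH H i * XH H j = XH H j * XH H i) \<and>
     (\<forall>i\<in>{1..<n}. TH H i * TH H i = (tH H - 1) * TH H i + tH H) \<and>
     (\<forall>i. 1 \<le> i \<and> i + 1 < n \<longrightarrow>
        TH H i * TH H (i+1) * TH H i = TH H (i+1) * TH H i * TH H (i+1)) \<and>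
     (\<forall>i\<in>{1..<n}. \<forall>j\<in>{1..<n}. (i + 1 < j \<or> j + 1 < i) \<longrightarrow> TH H i * TH H j = TH H j * TH H i) \<and>
     (\<forall>i\<in>{1..<n}. TH H i * XH H i * TH H i = tH H * XH H (i+1)) \<and>
     (\<forall>i\<in>{1..<n}. \<forall>j\<in>{1..n}. j \<noteq> i \<and> j \<noteq> i + 1 \<longrightarrow> TH H i * XH H j = XH H j * TH H i) \<and>
     (\<forall>h. \<exists>!c :: int \<times> (nat \<Rightarrow> int) \<times> (nat \<Rightarrow> nat) \<Rightarrow> int.
          (\<forall>b. c b \<noteq> 0 \<longrightarrow> b \<in> basis_idx n) \<and> finite {b. c b \<noteq> 0} \<and>
          h = (\<Sum>b\<in>{b. c b \<noteq> 0}. of_int (c b) * basis_elt H n b))"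

definition laurent :: "'h::ring_1 ahecke \<Rightarrow> 'h set" where
  "laurent H = {\<Sum>k\<in>F. of_int (a k) * zpow (tH H) k | F a. finite F}"

definition hspan :: "'h::ring_1 ahecke \<Rightarrow> nat \<Rightarrow> (nat \<Rightarrow> nat) set \<Rightarrow> 'h set" where
  "hspan H n A = {\<Sum>w\<in>A. c w * Tw H n w | c. \<forall>w. c w \<in> laurent H}"

definition Hfin :: "'h::ring_1 ahecke \<Rightarrow> nat \<Rightarrow> 'h set" where
  "Hfin H n = hspan H n (Sn n)"

definition Hpar :: "'h::ring_1 ahecke \<Rightarrow> nat \<Rightarrow> (nat \<Rightarrow> int) \<Rightarrow> 'h set" where
  "Hpar H n lam = hspan H n (stab n lam)"

definition one_par :: "'h::ring_1 ahecke \<Rightarrow> nat \<Rightarrow> (nat \<Rightarrow> int) \<Rightarrow> 'h" where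
  "one_par H n lam = (\<Sum>w\<in>stab n lam. Tw H n w)"

definition cols :: "nat \<Rightarrow> nat \<Rightarrow> nat set set" where
  "cols n l = {C. C \<subseteq> {1..n} \<and> card C = l}"

definition col_le :: "nat set \<Rightarrow> nat set \<Rightarrow> bool" where
  "col_le E F \<longleftrightarrow> card E = card F \<and>
     (\<forall>i < card E. sorted_list_of_set E ! i \<le> sorted_list_of_set F ! i)"

definition scol :: "nat \<Rightarrow> nat set \<Rightarrow> nat set" where
  "scol j C = sref j ` C"

definition Xcol :: "'h::ring_1 ahecke \<Rightarrow> nat set \<Rightarrow> 'h" where
  "Xcol H C = prod_list (map (XH H) (sorted_list_of_set C))"

definition ucol :: "nat \<Rightarrow> nat set \<Rightarrow> nat \<Rightarrow> nat" where
  "ucol n C k = (if 1 \<le> k \<and> k \<le> card C then sorted_list_of_set C ! (k - 1)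
                 else if card C < k \<and> k \<le> n then sorted_list_of_set ({1..n} - C) ! (k - card C - 1)
                 else k)"

definition decomp :: "'h::ring_1 ahecke \<Rightarrow> nat \<Rightarrow> nat \<Rightarrow> 'h \<Rightarrow> nat set \<Rightarrow> 'h" where
  "decomp H n l h = (THE hf. (\<forall>F. hf F \<in> (if F \<in> cols n l then Hpar H n (varpi l) else {0})) \<and>
                            h = (\<Sum>F\<in>cols n l. Tw H n (ucol n F) * hf F))"

text \<open>A tableau C_r (x) ... (x) C_1 is the list [C_r, ..., C_1]; C (x) K is C # K.
  The value on [] is a junk value and never used.\<close>
fun Psi :: "'h::ring_1 ahecke \<Rightarrow> nat \<Rightarrow> nat set list \<Rightarrow> 'h" where
  "Psi H n [] = 1"
| "Psi H n [C] = tH H ^ perm_len n (ucol n C) * hinv (Tw H n (inv (ucol n C)))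
                  * one_par H n (varpi (card C))"
| "Psi H n (C # D # S) = tH H ^ perm_len n (ucol n C) * hinv (Tw H n (inv (ucol n C)))
                  * decomp H n (card C) (Psi H n (D # S)) C"

definition fDK :: "'h::ring_1 ahecke \<Rightarrow> nat \<Rightarrow> nat \<Rightarrow> nat set \<Rightarrow> nat set list \<Rightarrow> 'h" where
  "fDK H n j D K = (if col_le (scol j D) D
      then tH H * hinv (TH H j) * Psi H n (scol j D # K)
      else TH H j * Psi H n (scol j D # K) + (1 - tH H) * Psi H n (D # K))"

definition gDK :: "'h::ring_1 ahecke \<Rightarrow> nat \<Rightarrow> nat \<Rightarrow> nat set \<Rightarrow> nat set list \<Rightarrow> 'h" where
  "gDK H n j D K = (if col_le (scol j D) D
      then tH H * hinv (TH H j) * Psi H n (scol j D # K) - (1 - tH H) * Psi H n (D # K)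
      else TH H j * Psi H n (scol j D # K))"

definition is_tableau :: "nat \<Rightarrow> nat set list \<Rightarrow> bool" where
  "is_tableau n K \<longleftrightarrow> K \<noteq> [] \<and> (\<forall>C\<in>set K. C \<subseteq> {1..n} \<and> 1 \<le> card C) \<and>
     sorted_wrt (\<lambda>A B. card B \<le> card A) K"

end

theory Submission
  imports Defs
begin

lemma prod_insort_comm:
  fixes X :: "nat \<Rightarrow> 'h::ring_1"
  assumes "\<forall>y\<in>set xs. X a * X y = X y * X a"
  shows "prod_list (map X (insort a xs)) = X a * prod_list (map X xs)"
  using assms by (induction xs) (auto simp: mult.assoc[symmetric])

lemma Xlist_remove:
  fixes X :: "nat \<Rightarrow> 'h::ring_1"
  assumes "finite C" "a \<in> C" "\<forall>y\<in>C. X a * X y = X y * X a"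
  shows "prod_list (map X (sorted_list_of_set C)) = X a * prod_list (map X (sorted_list_of_set (C - {a})))"
proof -
  have "C = insert a (C - {a})" using assms by auto
  hence "sorted_list_of_set C = insort a (sorted_list_of_set (C - {a}))"
    using assms by (metis finite_Diff sorted_list_of_set_insert Diff_iff singletonI)
  thus ?thesis using assms by (simp add: prod_insort_comm)
qed

lemma comm_prod:
  fixes X :: "nat \<Rightarrow> 'h::ring_1"
  assumes "\<forall>y\<in>set xs. T * X y = X y * T"
  shows "T * prod_list (map X xs) = prod_list (map X xs) * T"
  using assms
proof (induction xs)
  case (Cons y ys)
  have "T * X y = X y * T" using Cons.prems by simp
  hence "T * (X y * prod_list (map X ys)) = X y * T * prod_list (map X ys)" by (simp add: mult.assoc[symmetric])
  also have "\<dots> = X y * prod_list (map X ys) * T" using Cons by (simp add: mult.assoc)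
  finally show ?case by simp
qed simp

lemma sref_invol[simp]: "sref j (sref j x) = x"
  by (simp add: sref_def)

lemma mem_scol: "x \<in> scol j C \<longleftrightarrow> sref j x \<in> C"
  unfolding scol_def by (metis image_iff sref_invol)

lemma scol_invol[simp]: "scol j (scol j C) = C"
  by (auto simp: mem_scol)

lemma scol_A: "j \<in> C \<Longrightarrow> Suc j \<notin> C \<Longrightarrow> scol j C = insert (Suc j) (C - {j})"
  by (auto simp: mem_scol sref_def transpose_def split: if_splits)

lemma scol_B: "Suc j \<in> C \<Longrightarrow> j \<notin> C \<Longrightarrow> scol j C = insert j (C - {Suc j})"
  by (auto simp: mem_scol sref_def transpose_def split: if_splits)

lemma scol_N: "(j \<in> C \<longleftrightarrow> Suc j \<in> C) \<Longrightarrow> scol j C = C"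
  by (auto simp: mem_scol sref_def transpose_def split: if_splits)

lemma scol_cols: "C \<in> cols n l \<Longrightarrow> j \<in> {1..<n} \<Longrightarrow> scol j C \<in> cols n l"
proof -
  assume a: "C \<in> cols n l" "j \<in> {1..<n}"
  have "card (scol j C) = card C" by (simp add: scol_def sref_def card_image)
  moreover have "scol j C \<subseteq> {1..n}" using a unfolding cols_def
    by (auto simp: mem_scol sref_def transpose_def split: if_splits)
  ultimately show ?thesis using a by (auto simp: cols_def)
qed

lemma col_le_B:
  assumes "finite D" "Suc j \<in> D" "j \<notin> D"
  shows "col_le (scol j D) D"
proof -
  let ?xs = "sorted_list_of_set D"
  have sm: "strict_mono_on D (sref j)"
    unfolding strict_mono_on_def using assms by (auto simp: sref_def transpose_def)
  have "sorted_wrt (<) (map (sref j) ?xs)"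
    unfolding sorted_wrt_map
    apply (rule sorted_wrt_mono_rel[OF _ strict_sorted_list_of_set])
    using sm assms by (auto simp: strict_mono_on_def)
  moreover have "set (map (sref j) ?xs) = scol j D" using assms by (simp add: scol_def)
  moreover have "length (map (sref j) ?xs) = card (scol j D)"
    using assms by (simp add: scol_def card_image sref_def)
  ultimately have eq: "sorted_list_of_set (scol j D) = map (sref j) ?xs"
    using assms by (subst sorted_list_of_set_unique[symmetric]) (auto simp: scol_def)
  have le: "\<And>x. x \<in> D \<Longrightarrow> sref j x \<le> x" using assms by (auto simp: sref_def transpose_def)
  have c: "card (scol j D) = card D" by (simp add: scol_def sref_def card_image)
  show ?thesis unfolding col_le_def eq c
  proof (intro conjI allI impI refl)
    fix i assume "i < card D"
    hence "?xs ! i \<in> D" using assms by (metis nth_mem length_sorted_list_of_set set_sorted_list_of_set)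
    hence "sref j (?xs ! i) \<le> ?xs ! i" by (rule le)
    thus "map (sref j) ?xs ! i \<le> ?xs ! i" using \<open>i < card D\<close> by simp
  qed

qed

lemma col_le_A:
  assumes "finite D" "j \<in> D" "Suc j \<notin> D"
  shows "\<not> col_le (scol j D) D"
proof
  assume a: "col_le (scol j D) D"
  have "col_le (scol j (scol j D)) (scol j D)"
    apply (rule col_le_B) using assms by (auto simp: mem_scol sref_def) (simp add: scol_def)
  hence b: "col_le D (scol j D)" by simp
  have "sorted_list_of_set (scol j D) = sorted_list_of_set D"
    using a b unfolding col_le_def by (intro nth_equalityI) (auto intro: antisym)
  hence "scol j D = D" using assms
    by (metis finite_imageI scol_def set_sorted_list_of_set)
  thus False using assms by (metis insertI1 scol_A Diff_iff singletonI Suc_n_not_n)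
qed

locale hl =
  fixes t T Xj Xk s :: "'h::ring_1"
  assumes central: "\<And>h. t * h = h * t"
    and ts: "t * s = 1" "s * t = 1"
    and quad: "T * T = (t - 1) * T + t"
    and bra: "T * Xj * T = t * Xk"
begin

lemma Tinv1: "T * (T + 1 - t) = t"
proof -
  have "T * (T + 1 - t) = T * T + T - T * t" by (simp add: algebra_simps)
  also have "\<dots> = (t - 1) * T + t + T - t * T" by (simp add: quad central[of T])
  also have "\<dots> = t" by (simp add: algebra_simps)
  finally show ?thesis .
qed
lemma Tinv2: "(T + 1 - t) * T = t"
proof -
  have "(T + 1 - t) * T = T * T + T - t * T" by (simp add: algebra_simps)
  also have "\<dots> = (t - 1) * T + t + T - t * T" by (simp add: quad)
  also have "\<dots> = t" by (simp add: algebra_simps)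
  finally show ?thesis .
qed

lemma cancel: "t * a = t * b \<Longrightarrow> a = b"
  by (metis mult.assoc mult_1 ts(2))

lemma TXj: "T * Xj = Xk * (T + 1 - t)"
proof (rule cancel)
  have "t * (T * Xj) = T * Xj * t" by (rule central)
  also have "\<dots> = T * Xj * T * (T + 1 - t)" by (simp add: mult.assoc Tinv1)
  also have "\<dots> = t * (Xk * (T + 1 - t))" by (metis bra mult.assoc)
  finally show "t * (T * Xj) = t * (Xk * (T + 1 - t))" .
qed

lemma TXk: "T * Xk = Xj * T - (1 - t) * Xk"
proof -
  have "t * ((T + 1 - t) * Xk) = (T + 1 - t) * (t * Xk)"
    by (metis central mult.assoc)
  also have "\<dots> = (T + 1 - t) * T * Xj * T" by (metis bra mult.assoc)
  also have "\<dots> = t * (Xj * T)" by (simp add: Tinv2 mult.assoc)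
  finally have "(T + 1 - t) * Xk = Xj * T" by (rule cancel)
  thus ?thesis by (simp add: algebra_simps)
qed

lemma TXk2: "(T + 1 - t) * Xk = Xj * T"
  using TXk by (simp add: algebra_simps)

lemma TXjXk: "T * (Xj * Xk) = Xk * Xj * T"
  by (metis TXj TXk2 mult.assoc)

lemma hinvT: "t * hinv T = T + 1 - t"
proof -
  have sc: "\<And>h. s * h = h * s"
    by (metis central mult.assoc mult_1 mult_1_right ts)
  let ?b = "s * (T + 1 - t)"
  have b1: "T * ?b = 1" by (metis Tinv1 mult.assoc sc ts(2))
  have b2: "?b * T = 1" by (metis Tinv2 mult.assoc ts(2))
  have "hinv T = ?b" unfolding hinv_def
  proof (rule the_equality)
    fix b' assume "T * b' = 1 \<and> b' * T = 1"
    thus "b' = ?b" by (metis b1 mult.assoc mult_1 mult_1_right)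
  qed (use b1 b2 in auto)
  thus ?thesis by (metis mult.assoc mult_1 ts(1))
qed

end

lemma ax_parts:
  assumes "is_affine_hecke n H"
  shows "\<exists>s. tH H * s = 1 \<and> s * tH H = 1" "\<forall>h. tH H * h = h * tH H"
    "\<forall>i\<in>{1..n}. \<forall>j\<in>{1..n}. XH H i * XH H j = XH H j * XH H i"
    "\<forall>i\<in>{1..<n}. TH H i * TH H i = (tH H - 1) * TH H i + tH H"
    "\<forall>i\<in>{1..<n}. TH H i * XH H i * TH H i = tH H * XH H (i+1)"
    "\<forall>i\<in>{1..<n}. \<forall>j\<in>{1..n}. j \<noteq> i \<and> j \<noteq> i + 1 \<longrightarrow> TH H i * XH H j = XH H j * TH H i"
  using assms unfolding is_affine_hecke_def apply -
  apply (elim conjE, assumption)+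
  done

lemma hl_inst:
  assumes "is_affine_hecke n H" "j \<in> {1..<n}"
  shows "\<exists>s. hl (tH H) (TH H j) (XH H j) (XH H (j+1)) s"
proof -
  have A: "\<exists>s. tH H * s = 1 \<and> s * tH H = 1" "\<forall>h. tH H * h = h * tH H"
    "TH H j * TH H j = (tH H - 1) * TH H j + tH H"
    "TH H j * XH H j * TH H j = tH H * XH H (j+1)"
    using ax_parts[OF assms(1)] assms(2) by (blast, blast, blast, blast)
  then obtain s where s: "tH H * s = 1" "s * tH H = 1" by blast
  have "hl (tH H) (TH H j) (XH H j) (XH H (j+1)) s"
    unfolding hl_def using A(2-4) s by (intro conjI allI; (rule refl)?; blast)
  thus ?thesis ..
qed

theorem lemma6p4:
  fixes H :: "'h::ring_1 ahecke" and n l j :: nat and K :: "nat set list"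
  assumes "is_affine_hecke n H"
    and "is_tableau n K"
    and "l \<in> {1..n}" and "card (hd K) \<le> l"
    and "j \<in> {1..<n}"
  shows "tH H * hinv (TH H j) * (\<Sum>C\<in>cols n l. Xcol H C * Psi H n (C # K))
           = (\<Sum>D\<in>cols n l. Xcol H D * fDK H n j D K) \<and>
         TH H j * (\<Sum>C\<in>cols n l. Xcol H C * Psi H n (C # K))
           = (\<Sum>D\<in>cols n l. Xcol H D * gDK H n j D K)"
proof -
  let ?t = "tH H" and ?T = "TH H j" and ?X = "XH H"
  let ?P = "\<lambda>C. Psi H n (C # K)"
  obtain s where hl: "hl ?t ?T (?X j) (?X (Suc j)) s"
    using hl_inst[OF assms(1,5)] by auto
  have jn: "1 \<le> j" "Suc j \<le> n" using assms(5) by auto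
  have ax: "\<forall>i\<in>{1..n}. \<forall>j\<in>{1..n}. ?X i * ?X j = ?X j * ?X i"
     "\<forall>i\<in>{1..<n}. \<forall>j\<in>{1..n}. j \<noteq> i \<and> j \<noteq> i + 1 \<longrightarrow> TH H i * ?X j = ?X j * TH H i"
    using ax_parts[OF assms(1)] by blast+
  have Xcomm: "\<And>i k. i \<in> {1..n} \<Longrightarrow> k \<in> {1..n} \<Longrightarrow> ?X i * ?X k = ?X k * ?X i"
    using ax(1) by blast
  have TXo: "\<And>i. i \<in> {1..n} \<Longrightarrow> i \<noteq> j \<Longrightarrow> i \<noteq> Suc j \<Longrightarrow> ?T * ?X i = ?X i * ?T"
    using ax(2) assms(5) by simp
  have central: "\<And>h. ?t * h = h * ?t" using hl.central[OF hl] .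
  have rem: "\<And>C a. C \<subseteq> {1..n} \<Longrightarrow> a \<in> C \<Longrightarrow> Xcol H C = ?X a * Xcol H (C - {a})"
    unfolding Xcol_def
  proof (rule Xlist_remove)
    fix C a assume Cs: "C \<subseteq> {1..n}" and a: "a \<in> C"
    show "finite C" using Cs by (rule finite_subset) simp
    show "a \<in> C" by (rule a)
    show "\<forall>y\<in>C. ?X a * ?X y = ?X y * ?X a"
    proof
      fix y assume "y \<in> C" thus "?X a * ?X y = ?X y * ?X a" using Xcomm[of a y] Cs a by blast
    qed
  qed
  have commE: "\<And>E. E \<subseteq> {1..n} \<Longrightarrow> j \<notin> E \<Longrightarrow> Suc j \<notin> E \<Longrightarrow> ?T * Xcol H E = Xcol H E * ?T"
    unfolding Xcol_def
  proof (rule comm_prod)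
    fix E assume E: "E \<subseteq> {1..n}" "j \<notin> E" "Suc j \<notin> E"
    have "finite E" using E(1) by (rule finite_subset) simp
    show "\<forall>y\<in>set (sorted_list_of_set E). ?T * ?X y = ?X y * ?T"
    proof
      fix y assume "y \<in> set (sorted_list_of_set E)"
      hence "y \<in> E" using \<open>finite E\<close> by simp
      thus "?T * ?X y = ?X y * ?T" using E by (intro TXo) auto
    qed
  qed
  define alpha where "alpha C = (if j \<in> C \<and> Suc j \<notin> C then (?T + 1 - ?t) * ?P C else ?T * ?P C)" for C
  define beta where "beta C = (if Suc j \<in> C \<and> j \<notin> C then - ((1 - ?t) * ?P C) else 0)" for C
  have step1: "?T * (Xcol H C * ?P C) = Xcol H (scol j C) * alpha C + Xcol H C * beta C"
    if C: "C \<in> cols n l" for C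
  proof -
    have Cs: "C \<subseteq> {1..n}" using C by (simp add: cols_def)
    consider (A) "j \<in> C" "Suc j \<notin> C" | (B) "Suc j \<in> C" "j \<notin> C"
      | (N) "j \<notin> C" "Suc j \<notin> C" | (NN) "j \<in> C" "Suc j \<in> C" by blast
    then show ?thesis
    proof cases
      case A
      let ?E = "C - {j}"
      have sc: "scol j C = insert (Suc j) ?E" using A by (rule scol_A)
      have x1: "Xcol H C = ?X j * Xcol H ?E" using rem[OF Cs A(1)] .
      have x2: "Xcol H (scol j C) = ?X (Suc j) * Xcol H ?E"
        using rem[of "scol j C" "Suc j"] sc Cs jn A by auto
      have cE: "?T * Xcol H ?E = Xcol H ?E * ?T" using Cs A by (intro commE) auto
      have cE2: "(?T + 1 - ?t) * Xcol H ?E = Xcol H ?E * (?T + 1 - ?t)"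
        using cE central[of "Xcol H ?E"] by (simp add: algebra_simps)
      have "?T * (Xcol H C * ?P C) = (?T * ?X j) * Xcol H ?E * ?P C" by (simp add: x1 mult.assoc)
      also have "\<dots> = ?X (Suc j) * ((?T + 1 - ?t) * Xcol H ?E) * ?P C"
        using hl.TXj[OF hl] by (simp add: mult.assoc)
      also have "\<dots> = Xcol H (scol j C) * alpha C"
        using A by (simp add: cE2 x2 alpha_def mult.assoc)
      finally show ?thesis using A by (simp add: beta_def)
    next
      case B
      let ?E = "C - {Suc j}"
      have sc: "scol j C = insert j ?E" using B by (rule scol_B)
      have x1: "Xcol H C = ?X (Suc j) * Xcol H ?E" using rem[OF Cs B(1)] .
      have x2: "Xcol H (scol j C) = ?X j * Xcol H ?E"
        using rem[of "scol j C" "j"] sc Cs jn B by auto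
      have cE: "?T * Xcol H ?E = Xcol H ?E * ?T" using Cs B by (intro commE) auto
      have cE2: "(1 - ?t) * (?X (Suc j) * Xcol H ?E) = ?X (Suc j) * Xcol H ?E * (1 - ?t)"
        using central[of "?X (Suc j) * Xcol H ?E"] by (simp add: algebra_simps)
      have "?T * (Xcol H C * ?P C) = (?T * ?X (Suc j)) * Xcol H ?E * ?P C" by (simp add: x1 mult.assoc)
      also have "\<dots> = (?X j * ?T - (1 - ?t) * ?X (Suc j)) * Xcol H ?E * ?P C"
        using hl.TXk[OF hl] by simp
      also have "\<dots> = ?X j * (?T * Xcol H ?E) * ?P C - (1 - ?t) * (?X (Suc j) * Xcol H ?E) * ?P C"
        by (simp add: left_diff_distrib mult.assoc)
      also have "\<dots> = Xcol H (scol j C) * alpha C + Xcol H C * beta C"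
        using B by (simp add: cE cE2 x1 x2 alpha_def beta_def mult.assoc)
      finally show ?thesis .
    next
      case N
      have sc: "scol j C = C" using N by (intro scol_N) auto
      show ?thesis using N commE[OF Cs N]
        by (simp add: sc alpha_def beta_def mult.assoc[symmetric])
    next
      case NN
      let ?E = "C - {j} - {Suc j}"
      have sc: "scol j C = C" using NN by (intro scol_N) auto
      have x1: "Xcol H C = ?X j * (?X (Suc j) * Xcol H ?E)"
      proof -
        have s1: "C - {j} \<subseteq> {1..n}" using Cs by blast
        have s2: "Suc j \<in> C - {j}" using NN by simp
        show ?thesis using rem[OF Cs NN(1)] rem[OF s1 s2] by simp
      qed
      have cE: "?T * Xcol H ?E = Xcol H ?E * ?T" using Cs by (intro commE) auto
      have jk: "?X (Suc j) * ?X j = ?X j * ?X (Suc j)" using jn by (intro Xcomm) auto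
      have "?T * (Xcol H C * ?P C) = (?T * (?X j * ?X (Suc j))) * Xcol H ?E * ?P C"
        by (simp add: x1 mult.assoc)
      also have "\<dots> = ?X j * ?X (Suc j) * (?T * Xcol H ?E) * ?P C"
        using hl.TXjXk[OF hl] jk by (simp add: mult.assoc)
      also have "\<dots> = Xcol H C * (?T * ?P C)" by (simp add: cE x1 mult.assoc)
      finally show ?thesis using NN by (simp add: sc alpha_def beta_def)
    qed
  qed
  have hT: "?t * hinv ?T = ?T + 1 - ?t" using hl.hinvT[OF hl] .
  have step3: "alpha (scol j D) + beta D = gDK H n j D K" if D: "D \<in> cols n l" for D
  proof -
    have fD: "finite D" using D by (auto simp: cols_def intro: finite_subset)
    consider (A) "j \<in> D" "Suc j \<notin> D" | (B) "Suc j \<in> D" "j \<notin> D"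
      | (N) "j \<in> D \<longleftrightarrow> Suc j \<in> D" by blast
    then show ?thesis
    proof cases
      case A
      have "Suc j \<in> scol j D" "j \<notin> scol j D" using A by (auto simp: mem_scol sref_def)
      then show ?thesis using col_le_A[OF fD A] A by (simp add: alpha_def beta_def gDK_def)
    next
      case B
      have "j \<in> scol j D" "Suc j \<notin> scol j D" using B by (auto simp: mem_scol sref_def)
      then show ?thesis using col_le_B[OF fD B] B
        by (simp add: alpha_def beta_def gDK_def hT)
    next
      case N
      have sc: "scol j D = D" using N by (rule scol_N)
      have cl: "col_le D D" by (simp add: col_le_def)
      show ?thesis using N by (auto simp: sc cl alpha_def beta_def gDK_def hT algebra_simps)
    qed
  qed
  have fin: "finite (cols n l)"
    by (rule finite_subset[of _ "Pow {1..n}"]) (auto simp: cols_def)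
  have reidx: "(\<Sum>C\<in>cols n l. Xcol H (scol j C) * alpha C) = (\<Sum>D\<in>cols n l. Xcol H D * alpha (scol j D))"
    by (rule sum.reindex_bij_witness[of _ "scol j" "scol j"]) (auto intro: scol_cols assms(5))
  have second: "?T * (\<Sum>C\<in>cols n l. Xcol H C * ?P C) = (\<Sum>D\<in>cols n l. Xcol H D * gDK H n j D K)"
  proof -
    have "?T * (\<Sum>C\<in>cols n l. Xcol H C * ?P C) = (\<Sum>C\<in>cols n l. ?T * (Xcol H C * ?P C))"
      by (simp add: sum_distrib_left)
    also have "\<dots> = (\<Sum>C\<in>cols n l. Xcol H (scol j C) * alpha C + Xcol H C * beta C)"
      by (rule sum.cong) (auto simp: step1)
    also have "\<dots> = (\<Sum>D\<in>cols n l. Xcol H D * alpha (scol j D)) + (\<Sum>D\<in>cols n l. Xcol H D * beta D)"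
      by (simp add: sum.distrib reidx)
    also have "\<dots> = (\<Sum>D\<in>cols n l. Xcol H D * (alpha (scol j D) + beta D))"
      by (simp add: sum.distrib distrib_left)
    also have "\<dots> = (\<Sum>D\<in>cols n l. Xcol H D * gDK H n j D K)"
      by (rule sum.cong) (auto simp: step3)
    finally show ?thesis .
  qed
  have fg: "fDK H n j D K = gDK H n j D K + (1 - ?t) * ?P D" for D
    by (simp add: fDK_def gDK_def)
  have first: "?t * hinv ?T * (\<Sum>C\<in>cols n l. Xcol H C * ?P C) = (\<Sum>D\<in>cols n l. Xcol H D * fDK H n j D K)"
  proof -
    have "?t * hinv ?T * (\<Sum>C\<in>cols n l. Xcol H C * ?P C)
        = ?T * (\<Sum>C\<in>cols n l. Xcol H C * ?P C) + (1 - ?t) * (\<Sum>C\<in>cols n l. Xcol H C * ?P C)"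
      by (simp add: hT algebra_simps)
    also have "\<dots> = (\<Sum>D\<in>cols n l. Xcol H D * gDK H n j D K) + (\<Sum>D\<in>cols n l. (1 - ?t) * (Xcol H D * ?P D))"
      by (subst second) (simp add: sum_distrib_left)
    also have "\<dots> = (\<Sum>D\<in>cols n l. Xcol H D * gDK H n j D K) + (\<Sum>D\<in>cols n l. Xcol H D * ((1 - ?t) * ?P D))"
    proof -
      have "(1 - ?t) * (Xcol H D * ?P D) = Xcol H D * ((1 - ?t) * ?P D)" for D
        using central[of "Xcol H D"] by (simp add: algebra_simps flip: mult.assoc)
      thus ?thesis by simp
    qed
    also have "\<dots> = (\<Sum>D\<in>cols n l. Xcol H D * fDK H n j D K)"
      by (simp add: fg distrib_left sum.distrib)
    finally show ?thesis .
  qed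
  show ?thesis using first second by blast
qed

end
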